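(* Let $f_j,g_i:\mathbb{R}^n\to\mathbb{R}$ ($j=1,\dots,m$, $i=1,\dots,p$) be continuously differentiable, let $x\in\mathbb{R}^n$, and let $(t,d)$ be the solution of $QP(x)$. Then: (I) $t\le \Phi(x)-\frac12 d^Td$. (II) If $d=0$ and MFCQ holds at $x$, then $x$ is a strongly critical point of the MOP. (III) If $d\neq 0$, then there is $\bar\sigma>0$ such that for every $\sigma\ge\bar\sigma$ and every $j\in\{1,\dots,m\}$ one has $\theta_{j,\sigma}(x;d)<0$, and $d$ is a descent direction of $\Psi_{j,\sigma}$ at $x$ (i.e. there is $\bar\alpha>0$ with $\Psi_{j,\sigma}(x+\alpha d)<\Psi_{j,\sigma}(x)$ for all $\alpha\in(0,\bar\alpha]$).
   Context: The MOP is: minimize $(f_1(x),\dots,f_m(x))$ subject to $g_i(x)\le 0$, $i=1,\dots,p$, with feasible set $X=\{x: g_i(x)\le 0\ \forall i\}$. $\Phi(x)=\max\{0,g_1(x),\dots,g_p(x)\}$; $I(x)=\{i\in\{1,\dots,p\}: g_i(x)=\Phi(x)\}$. $\Phi^*(x;d)=\max\{\max_{i\in I(x)}(g_i(x)+\nabla g_i(x)^Td),\,0\}-\Phi(x)$ (the inner max over an empty set is omitted). For $\sigma>0$: $\Psi_{j,\sigma}(x)=f_j(x)+\sigma\Phi(x)$ and $\theta_{j,\sigma}(x;d)=\nabla f_j(x)^Td+\sigma\Phi^*(x;d)$. $QP(x)$: minimize over $(t,d)\in\mathbb{R}\times\mathbb{R}^n$ the quantity $t+\frac12 d^Td$ subject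 to $\nabla f_j(x)^Td\le t$ ($j=1,\dots,m$) and $g_i(x)+\nabla g_i(x)^Td\le t$ ($i=1,\dots,p$); it has a unique solution. MFCQ holds at $x$ if there is $z\in\mathbb{R}^n$ with $\nabla g_i(x)^Tz<0$ for all $i\in I(x)$. A point $x\in X$ is a strongly critical point of the MOP if there exist $\lambda\in\mathbb{R}^m_+\setminus\{0\}$ and $\mu\in\mathbb{R}^p_+$ with $\sum_j\lambda_j\nabla f_j(x)+\sum_i\mu_i\nabla g_i(x)=0$ and $\mu_ig_i(x)=0$ for all $i$. *)

theory Defs
  imports "HOL-Analysis.Analysis"
begin

text \<open>Constraints g i, i = 1..p, with gradients gg i; objectives f j, j = 1..m, with gradients gf j.\<close>

definition Phi :: "nat \<Rightarrow> (nat \<Rightarrow> real^'n \<Rightarrow> real) \<Rightarrow> real^'n \<Rightarrow> real" where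
  "Phi p g x = Max (insert 0 {g i x | i. i \<in> {1..p}})"

definition actI :: "nat \<Rightarrow> (nat \<Rightarrow> real^'n \<Rightarrow> real) \<Rightarrow> real^'n \<Rightarrow> nat set" where
  "actI p g x = {i \<in> {1..p}. g i x = Phi p g x}"

definition Phi_star ::
  "nat \<Rightarrow> (nat \<Rightarrow> real^'n \<Rightarrow> real) \<Rightarrow> (nat \<Rightarrow> real^'n \<Rightarrow> real^'n) \<Rightarrow> real^'n \<Rightarrow> real^'n \<Rightarrow> real" where
  "Phi_star p g gg x d =
     Max (insert 0 {g i x + gg i x \<bullet> d | i. i \<in> actI p g x}) - Phi p g x"

definition Psi ::
  "(real^'n \<Rightarrow> real) \<Rightarrow> nat \<Rightarrow> (nat \<Rightarrow> real^'n \<Rightarrow> real) \<Rightarrow> real \<Rightarrow> real^'n \<Rightarrow> real" where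
  "Psi fj p g \<sigma> x = fj x + \<sigma> * Phi p g x"

definition theta ::
  "(real^'n \<Rightarrow> real^'n) \<Rightarrow> nat \<Rightarrow> (nat \<Rightarrow> real^'n \<Rightarrow> real) \<Rightarrow> (nat \<Rightarrow> real^'n \<Rightarrow> real^'n)
     \<Rightarrow> real \<Rightarrow> real^'n \<Rightarrow> real^'n \<Rightarrow> real" where
  "theta gfj p g gg \<sigma> x d = gfj x \<bullet> d + \<sigma> * Phi_star p g gg x d"

definition QP_feasible ::
  "nat \<Rightarrow> (nat \<Rightarrow> real^'n \<Rightarrow> real^'n) \<Rightarrow> nat \<Rightarrow> (nat \<Rightarrow> real^'n \<Rightarrow> real) \<Rightarrow> (nat \<Rightarrow> real^'n \<Rightarrow> real^'n)
     \<Rightarrow> real^'n \<Rightarrow> real \<Rightarrow> real^'n \<Rightarrow> bool" where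
  "QP_feasible m gf p g gg x t d \<longleftrightarrow>
     (\<forall>j\<in>{1..m}. gf j x \<bullet> d \<le> t) \<and> (\<forall>i\<in>{1..p}. g i x + gg i x \<bullet> d \<le> t)"

definition QP_solution ::
  "nat \<Rightarrow> (nat \<Rightarrow> real^'n \<Rightarrow> real^'n) \<Rightarrow> nat \<Rightarrow> (nat \<Rightarrow> real^'n \<Rightarrow> real) \<Rightarrow> (nat \<Rightarrow> real^'n \<Rightarrow> real^'n)
     \<Rightarrow> real^'n \<Rightarrow> real \<Rightarrow> real^'n \<Rightarrow> bool" where
  "QP_solution m gf p g gg x t d \<longleftrightarrow>
     QP_feasible m gf p g gg x t d \<and>
     (\<forall>t' d'. QP_feasible m gf p g gg x t' d' \<longrightarrow> t + (1/2) * (d \<bullet> d) \<le> t' + (1/2) * (d' \<bullet> d'))"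

definition MFCQ ::
  "nat \<Rightarrow> (nat \<Rightarrow> real^'n \<Rightarrow> real) \<Rightarrow> (nat \<Rightarrow> real^'n \<Rightarrow> real^'n) \<Rightarrow> real^'n \<Rightarrow> bool" where
  "MFCQ p g gg x \<longleftrightarrow> (\<exists>z. \<forall>i\<in>actI p g x. gg i x \<bullet> z < 0)"

definition feasible_set :: "nat \<Rightarrow> (nat \<Rightarrow> real^'n \<Rightarrow> real) \<Rightarrow> (real^'n) set" where
  "feasible_set p g = {x. \<forall>i\<in>{1..p}. g i x \<le> 0}"

definition strongly_critical ::
  "nat \<Rightarrow> (nat \<Rightarrow> real^'n \<Rightarrow> real^'n) \<Rightarrow> nat \<Rightarrow> (nat \<Rightarrow> real^'n \<Rightarrow> real) \<Rightarrow> (nat \<Rightarrow> real^'n \<Rightarrow> real^'n)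
     \<Rightarrow> real^'n \<Rightarrow> bool" where
  "strongly_critical m gf p g gg x \<longleftrightarrow>
     x \<in> feasible_set p g \<and>
     (\<exists>lam \<mu> :: nat \<Rightarrow> real.
        (\<forall>j\<in>{1..m}. lam j \<ge> 0) \<and> (\<exists>j\<in>{1..m}. lam j \<noteq> 0) \<and>
        (\<forall>i\<in>{1..p}. \<mu> i \<ge> 0) \<and>
        (\<Sum>j\<in>{1..m}. lam j *\<^sub>R gf j x) + (\<Sum>i\<in>{1..p}. \<mu> i *\<^sub>R gg i x) = 0 \<and>
        (\<forall>i\<in>{1..p}. \<mu> i * g i x = 0))"

end

theory Submission
  imports Defs
begin



lemma Phi_ge0: "0 \<le> Phi p g x"
  unfolding Phi_def by (rule Max_ge) auto
lemma Phi_ge: "i \<in> {1..p} \<Longrightarrow> g i x \<le> Phi p g x"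
  unfolding Phi_def by (rule Max_ge) auto
lemma Phi_le: "0 \<le> c \<Longrightarrow> (\<And>i. i \<in> {1..p} \<Longrightarrow> g i x \<le> c) \<Longrightarrow> Phi p g x \<le> c"
  unfolding Phi_def by (subst Max_le_iff) auto
lemma Phi_pos: "0 < Phi p g x \<Longrightarrow> \<exists>i\<in>{1..p}. g i x = Phi p g x"
proof -
  assume a: "0 < Phi p g x"
  have "Phi p g x \<in> insert 0 {g i x | i. i \<in> {1..p}}"
    unfolding Phi_def by (rule Max_in) auto
  thus ?thesis using a by auto
qed
lemma Pstar_le: "0 \<le> c \<Longrightarrow> (\<And>i. i \<in> actI p g x \<Longrightarrow> g i x + gg i x \<bullet> d \<le> c) \<Longrightarrow> Phi_star p g gg x d \<le> c - Phi p g x"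
  unfolding Phi_star_def
proof -
  assume "0 \<le> c" "(\<And>i. i \<in> actI p g x \<Longrightarrow> g i x + gg i x \<bullet> d \<le> c)"
  moreover have "finite (actI p g x)" unfolding actI_def by auto
  ultimately have "Max (insert 0 {g i x + gg i x \<bullet> d | i. i \<in> actI p g x}) \<le> c"
    by (subst Max_le_iff) auto
  thus "Max (insert 0 {g i x + gg i x \<bullet> d | i. i \<in> actI p g x}) - Phi p g x \<le> c - Phi p g x" by simp
qed
lemma Pstar_ge: "Phi p g x + Phi_star p g gg x d \<ge> 0"
  "i \<in> actI p g x \<Longrightarrow> Phi p g x + Phi_star p g gg x d \<ge> g i x + gg i x \<bullet> d"
proof -
  have f: "finite (actI p g x)" unfolding actI_def by auto
  have e: "Phi p g x + Phi_star p g gg x d = Max (insert 0 {g i x + gg i x \<bullet> d | i. i \<in> actI p g x})"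
    unfolding Phi_star_def by simp
  show "Phi p g x + Phi_star p g gg x d \<ge> 0" unfolding e using f by (intro Max_ge) auto
  show "i \<in> actI p g x \<Longrightarrow> Phi p g x + Phi_star p g gg x d \<ge> g i x + gg i x \<bullet> d" unfolding e using f by (intro Max_ge) auto
qed

lemma dir_quot:
  fixes F :: "real^'n \<Rightarrow> real"
  assumes "(F has_derivative (\<lambda>h. G \<bullet> h)) (at x)"
  shows "((\<lambda>a. (F (x + a *\<^sub>R d) - F x) / a) \<longlongrightarrow> G \<bullet> d) (at_right 0)"
proof -
  have i: "((\<lambda>a::real. x + a *\<^sub>R d) has_derivative (\<lambda>h. h *\<^sub>R d)) (at 0)"
    by (auto intro!: derivative_eq_intros)
  have "((\<lambda>a. F (x + a *\<^sub>R d)) has_derivative (\<lambda>h. G \<bullet> (h *\<^sub>R d))) (at 0)"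
    using has_derivative_compose[OF i, of F "\<lambda>h. G \<bullet> h"] assms by simp
  moreover have "(\<lambda>h. G \<bullet> (h *\<^sub>R d)) = (*) (G \<bullet> d)" by (auto simp: fun_eq_iff)
  ultimately have "((\<lambda>a. F (x + a *\<^sub>R d)) has_field_derivative (G \<bullet> d)) (at 0)"
    by (simp add: has_field_derivative_def)
  hence "((\<lambda>a. (F (x + a *\<^sub>R d) - F x) / a) \<longlongrightarrow> G \<bullet> d) (at 0)"
    by (simp add: has_field_derivative_iff)
  thus ?thesis by (rule tendsto_mono[OF at_le, rotated]) simp
qed

lemma hull_weights:
  fixes w :: "'b \<Rightarrow> 'a::real_vector"
  assumes fin: "finite K" and y: "y \<in> convex hull (w ` K)"
  shows "\<exists>c. (\<forall>k\<in>K. 0 \<le> c k) \<and> sum c K = 1 \<and> (\<Sum>k\<in>K. c k *\<^sub>R w k) = y"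
proof -
  obtain u where u: "\<forall>v\<in>w ` K. 0 \<le> u v" "sum u (w ` K) = 1" "(\<Sum>v\<in>w ` K. u v *\<^sub>R v) = y"
  proof -
    have "y \<in> {y. \<exists>u. (\<forall>x\<in>w ` K. 0 \<le> u x) \<and> sum u (w ` K) = 1 \<and> (\<Sum>x\<in>w ` K. u x *\<^sub>R x) = y}"
      using y convex_hull_finite[OF finite_imageI[OF fin], of w] by simp
    thus ?thesis using that by blast
  qed
  define N where "N v = card {k \<in> K. w k = v}" for v
  define c where "c k = u (w k) / N (w k)" for k
  have Npos: "N v > 0" if "v \<in> w ` K" for v
  proof -
    from that obtain k where "k \<in> K" "w k = v" by auto
    hence "{k \<in> K. w k = v} \<noteq> {}" by auto
    thus ?thesis unfolding N_def using fin by (simp add: card_gt_0_iff)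
  qed
  have inner: "(\<Sum>k\<in>{k \<in> K. w k = v}. c k) = u v" if "v \<in> w ` K" for v
  proof -
    have "(\<Sum>k\<in>{k \<in> K. w k = v}. c k) = (\<Sum>k\<in>{k \<in> K. w k = v}. u v / N v)"
      by (rule sum.cong) (auto simp: c_def)
    also have "\<dots> = u v" using Npos[OF that] by (simp add: N_def)
    finally show ?thesis .
  qed
  have inner2: "(\<Sum>k\<in>{k \<in> K. w k = v}. c k *\<^sub>R w k) = u v *\<^sub>R v" if "v \<in> w ` K" for v
  proof -
    have "(\<Sum>k\<in>{k \<in> K. w k = v}. c k *\<^sub>R w k) = (\<Sum>k\<in>{k \<in> K. w k = v}. c k) *\<^sub>R v"
      by (simp add: scaleR_sum_left)
    thus ?thesis using inner[OF that] by simp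
  qed
  have "sum c K = (\<Sum>v\<in>w ` K. (\<Sum>k\<in>{k \<in> K. w k = v}. c k))"
    using sum.image_gen[OF fin, of c w] by simp
  also have "\<dots> = 1" using inner u(2) by (simp cong: sum.cong)
  finally have s1: "sum c K = 1" .
  have "(\<Sum>k\<in>K. c k *\<^sub>R w k) = (\<Sum>v\<in>w ` K. (\<Sum>k\<in>{k \<in> K. w k = v}. c k *\<^sub>R w k))"
    using sum.image_gen[OF fin, of "\<lambda>k. c k *\<^sub>R w k" w] by simp
  also have "\<dots> = y" using inner2 u(3) by (simp cong: sum.cong)
  finally have s2: "(\<Sum>k\<in>K. c k *\<^sub>R w k) = y" .
  have "\<forall>k\<in>K. 0 \<le> c k" using u(1) Npos unfolding c_def by auto
  with s1 s2 show ?thesis by blast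
qed

lemma neg_bound:
  fixes S :: "real set"
  assumes "finite S" "\<forall>s\<in>S. s < 0"
  shows "\<exists>c>0. \<forall>s\<in>S. s \<le> - c"
proof -
  have "Max (insert (-1) S) \<in> insert (-1) S" using assms by (intro Max_in) auto
  hence neg: "Max (insert (-1) S) < 0" using assms by auto
  have "\<forall>s\<in>S. s \<le> Max (insert (-1) S)" using assms by auto
  thus ?thesis using neg by (intro exI[of _ "- Max (insert (-1) S)"]) auto
qed

lemma ev_quot:
  fixes F :: "real^'n \<Rightarrow> real"
  assumes "(F has_derivative (\<lambda>h. G \<bullet> h)) (at x)" "\<eta> > 0"
  shows "\<forall>\<^sub>F a in at_right 0. F (x + a *\<^sub>R d) - F x < a * (G \<bullet> d + \<eta>)"
proof -
  have "\<forall>\<^sub>F a in at_right 0. (F (x + a *\<^sub>R d) - F x) / a < G \<bullet> d + \<eta>"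
    using order_tendstoD(2)[OF dir_quot[OF assms(1)]] assms(2) by simp
  moreover have "\<forall>\<^sub>F a in at_right (0::real). 0 < a" by (simp add: eventually_at_filter)
  ultimately show ?thesis
    by eventually_elim (simp add: pos_divide_less_eq mult.commute)
qed

lemma ev_cont:
  fixes F :: "real^'n \<Rightarrow> real"
  assumes "(F has_derivative (\<lambda>h. G \<bullet> h)) (at x)"
  shows "((\<lambda>a. F (x + a *\<^sub>R d)) \<longlongrightarrow> F x) (at_right 0)"
proof -
  have "isCont F x" using has_derivative_continuous[OF assms] by simp
  moreover have "((\<lambda>a::real. x + a *\<^sub>R d) \<longlongrightarrow> x) (at_right 0)"
    using tendsto_intros(1)[of x] by (auto intro!: tendsto_eq_intros)
  ultimately show ?thesis by (rule isCont_tendsto_compose)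
qed

lemma partI:
  assumes sol: "QP_solution m gf p g gg x t d"
  shows "t + (1/2) * (d \<bullet> d) \<le> Phi p g x"
proof -
  have "QP_feasible m gf p g gg x (Phi p g x) 0"
    unfolding QP_feasible_def using Phi_ge0[of p g x] Phi_ge[of _ p g x] by auto
  thus ?thesis using sol unfolding QP_solution_def by force
qed

lemma t_eq:
  assumes m_pos: "m \<ge> 1" and sol: "QP_solution m gf p g gg x t 0"
  shows "t = Phi p g x"
proof -
  have f: "QP_feasible m gf p g gg x t 0" using sol unfolding QP_solution_def by auto
  have "0 \<le> t" using f m_pos unfolding QP_feasible_def by force
  moreover have "\<And>i. i \<in> {1..p} \<Longrightarrow> g i x \<le> t" using f unfolding QP_feasible_def by auto
  ultimately have "Phi p g x \<le> t" by (rule Phi_le)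
  thus ?thesis using partI[OF sol] by simp
qed

lemma no_dir:
  assumes m_pos: "m \<ge> 1"
    and sol: "QP_solution m gf p g gg x t 0"
    and za: "\<forall>i\<in>actI p g x. gg i x \<bullet> z < 0"
    and zf: "Phi p g x = 0 \<longrightarrow> (\<forall>j\<in>{1..m}. gf j x \<bullet> z < 0)"
  shows False
proof -
  let ?P = "Phi p g x"
  have tP: "t = ?P" by (rule t_eq[OF m_pos sol])
  define S where "S = (\<lambda>i. gg i x \<bullet> z) ` actI p g x \<union> (if ?P = 0 then (\<lambda>j. gf j x \<bullet> z) ` {1..m} else {})"
  have "finite S" unfolding S_def actI_def by auto
  moreover have "\<forall>s\<in>S. s < 0" unfolding S_def using za zf by (auto split: if_splits)
  ultimately obtain c where c: "c > 0" "\<forall>s\<in>S. s \<le> - c" using neg_bound by blast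
  have ca: "\<And>i. i \<in> actI p g x \<Longrightarrow> gg i x \<bullet> z \<le> - c" using c(2) unfolding S_def by auto
  have cf: "\<And>j. ?P = 0 \<Longrightarrow> j \<in> {1..m} \<Longrightarrow> gf j x \<bullet> z \<le> - c" using c(2) unfolding S_def by auto
  have pos: "\<forall>\<^sub>F e in at_right (0::real). 0 < e" by (simp add: eventually_at_filter)
  have evf: "\<forall>j\<in>{1..m}. \<forall>\<^sub>F e in at_right 0. gf j x \<bullet> (e *\<^sub>R z) \<le> ?P - e * c / 2"
  proof
    fix j assume j: "j \<in> {1..m}"
    show "\<forall>\<^sub>F e in at_right 0. gf j x \<bullet> (e *\<^sub>R z) \<le> ?P - e * c / 2"
    proof (cases "?P = 0")
      case True
      have "gf j x \<bullet> z \<le> - c" using cf[OF True j] .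
      from pos show ?thesis
      proof eventually_elim
        case (elim e)
        have "e * (gf j x \<bullet> z) \<le> e * (- c)" using elim \<open>gf j x \<bullet> z \<le> - c\<close> by (intro mult_left_mono) auto
        moreover have "0 < e * c" using elim c(1) by simp
        ultimately show ?case using True by (simp add: algebra_simps)
      qed
    next
      case False
      hence Pp: "?P > 0" using Phi_ge0[of p g x] by simp
      have "((\<lambda>e. e * (gf j x \<bullet> z + c / 2)) \<longlongrightarrow> 0 * (gf j x \<bullet> z + c / 2)) (at_right 0)"
        by (intro tendsto_intros)
      hence "\<forall>\<^sub>F e in at_right 0. e * (gf j x \<bullet> z + c / 2) < ?P"
        using order_tendstoD(2) Pp by fastforce
      thus ?thesis by eventually_elim (simp add: algebra_simps)
    qed
  qed
  have evg: "\<forall>i\<in>{1..p}. \<forall>\<^sub>F e in at_right 0. g i x + gg i x \<bullet> (e *\<^sub>R z) \<le> ?P - e * c / 2"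
  proof
    fix i assume i: "i \<in> {1..p}"
    show "\<forall>\<^sub>F e in at_right 0. g i x + gg i x \<bullet> (e *\<^sub>R z) \<le> ?P - e * c / 2"
    proof (cases "g i x = ?P")
      case True
      hence "i \<in> actI p g x" using i unfolding actI_def by auto
      hence "gg i x \<bullet> z \<le> - c" by (rule ca)
      from pos show ?thesis
      proof eventually_elim
        case (elim e)
        have "e * (gg i x \<bullet> z) \<le> e * (- c)" using elim \<open>gg i x \<bullet> z \<le> - c\<close> by (intro mult_left_mono) auto
        moreover have "0 < e * c" using elim c(1) by simp
        ultimately show ?case using True by (simp add: algebra_simps)
      qed
    next
      case False
      hence lt: "g i x < ?P" using Phi_ge[OF i, of g x] by simp
      have "((\<lambda>e. g i x + e * (gg i x \<bullet> z + c / 2)) \<longlongrightarrow> g i x + 0 * (gg i x \<bullet> z + c / 2)) (at_right 0)"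
        by (intro tendsto_intros)
      hence "\<forall>\<^sub>F e in at_right 0. g i x + e * (gg i x \<bullet> z + c / 2) < ?P"
        using order_tendstoD(2) lt by fastforce
      thus ?thesis by eventually_elim (simp add: algebra_simps)
    qed
  qed
  have "((\<lambda>e. e * (z \<bullet> z) / 2 - c / 2) \<longlongrightarrow> 0 * (z \<bullet> z) / 2 - c / 2) (at_right 0)"
    by (intro tendsto_intros) simp_all
  hence evo: "\<forall>\<^sub>F e in at_right 0. e * (z \<bullet> z) / 2 - c / 2 < 0"
    by (rule order_tendstoD(2)) (use c(1) in simp)
  have "\<forall>\<^sub>F e in at_right 0. 0 < e \<and> e * (z \<bullet> z) / 2 - c / 2 < 0
     \<and> (\<forall>j\<in>{1..m}. gf j x \<bullet> (e *\<^sub>R z) \<le> ?P - e * c / 2)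
     \<and> (\<forall>i\<in>{1..p}. g i x + gg i x \<bullet> (e *\<^sub>R z) \<le> ?P - e * c / 2)"
  proof -
    have a: "\<forall>\<^sub>F e in at_right 0. \<forall>j\<in>{1..m}. gf j x \<bullet> (e *\<^sub>R z) \<le> ?P - e * c / 2"
      by (rule eventually_ball_finite[OF _ evf]) simp
    have b: "\<forall>\<^sub>F e in at_right 0. \<forall>i\<in>{1..p}. g i x + gg i x \<bullet> (e *\<^sub>R z) \<le> ?P - e * c / 2"
      by (rule eventually_ball_finite[OF _ evg]) simp
    from pos evo a b show ?thesis by eventually_elim blast
  qed
  then obtain e where e: "0 < e" "e * (z \<bullet> z) / 2 - c / 2 < 0"
     "\<forall>j\<in>{1..m}. gf j x \<bullet> (e *\<^sub>R z) \<le> ?P - e * c / 2"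
     "\<forall>i\<in>{1..p}. g i x + gg i x \<bullet> (e *\<^sub>R z) \<le> ?P - e * c / 2"
    using eventually_happens'[OF trivial_limit_at_right_real] by blast
  have "QP_feasible m gf p g gg x (?P - e * c / 2) (e *\<^sub>R z)"
    unfolding QP_feasible_def using e(3,4) by auto
  moreover have "\<forall>t' d'. QP_feasible m gf p g gg x t' d' \<longrightarrow> t \<le> t' + (1/2) * (d' \<bullet> d')"
    using sol unfolding QP_solution_def by simp
  ultimately have "t \<le> (?P - e * c / 2) + (1/2) * ((e *\<^sub>R z) \<bullet> (e *\<^sub>R z))"
    by force
  hence "?P \<le> ?P + e * (e * (z \<bullet> z) / 2 - c / 2)" using tP by (simp add: algebra_simps)
  moreover have "e * (e * (z \<bullet> z) / 2 - c / 2) < 0" using e(1,2) by (simp add: mult_pos_neg)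
  ultimately show False by simp
qed

lemma partII:
  assumes m_pos: "m \<ge> 1"
    and sol: "QP_solution m gf p g gg x t 0"
    and mf: "MFCQ p g gg x"
  shows "strongly_critical m gf p g gg x"
proof -
  let ?A = "actI p g x"
  have finA: "finite ?A" unfolding actI_def by auto
  have Asub: "?A \<subseteq> {1..p}" unfolding actI_def by auto
  obtain z where z: "\<forall>i\<in>?A. gg i x \<bullet> z < 0" using mf unfolding MFCQ_def by blast
  have P0: "Phi p g x = 0"
  proof (rule ccontr)
    assume "Phi p g x \<noteq> 0"
    thus False using no_dir[OF m_pos sol z] by blast
  qed
  have feas: "x \<in> feasible_set p g"
    unfolding feasible_set_def using Phi_ge[of _ p g x] P0 by auto
  define K where "K = Inl ` {1..m} \<union> Inr ` ?A"
  define w where "w = case_sum (\<lambda>j. gf j x) (\<lambda>i. gg i x)"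
  have finK: "finite K" unfolding K_def using finA by auto
  have zero: "0 \<in> convex hull (w ` K)"
  proof (rule ccontr)
    assume nz: "0 \<notin> convex hull (w ` K)"
    have "closed (convex hull (w ` K))"
      using finK by (intro compact_imp_closed compact_convex_hull finite_imp_compact) auto
    then obtain a b where ab: "a \<noteq> 0" "0 < b" "\<forall>v\<in>convex hull (w ` K). inner a v > b"
      using separating_hyperplane_closed_0[OF convex_convex_hull _ nz] by blast
    have sub: "w ` K \<subseteq> convex hull (w ` K)" by (rule hull_subset)
    have "\<forall>i\<in>?A. gg i x \<bullet> (-a) < 0"
    proof
      fix i assume "i \<in> ?A"
      hence "gg i x \<in> convex hull (w ` K)" using sub unfolding K_def w_def by force
      hence "inner a (gg i x) > b" using ab(3) by blast
      thus "gg i x \<bullet> (-a) < 0" using ab(2) by (simp add: inner_commute)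
    qed
    moreover have "\<forall>j\<in>{1..m}. gf j x \<bullet> (-a) < 0"
    proof
      fix j assume "j \<in> {1..m}"
      hence "gf j x \<in> convex hull (w ` K)" using sub unfolding K_def w_def by force
      hence "inner a (gf j x) > b" using ab(3) by blast
      thus "gf j x \<bullet> (-a) < 0" using ab(2) by (simp add: inner_commute)
    qed
    ultimately show False using no_dir[OF m_pos sol] by blast
  qed
  obtain c where c: "\<forall>k\<in>K. 0 \<le> c k" "sum c K = 1" "(\<Sum>k\<in>K. c k *\<^sub>R w k) = 0"
    using hull_weights[OF finK zero] by blast
  define lam where "lam j = c (Inl j)" for j
  define mu where "mu i = (if i \<in> ?A then c (Inr i) else 0)" for i
  have disj: "Inl ` {1..m} \<inter> Inr ` ?A = ({} :: (nat + nat) set)" by auto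
  have s1: "sum c K = (\<Sum>j\<in>{1..m}. lam j) + (\<Sum>i\<in>?A. c (Inr i))"
    unfolding K_def lam_def using finA disj
    by (simp add: sum.union_disjoint sum.reindex)
  have s2: "(\<Sum>k\<in>K. c k *\<^sub>R w k) = (\<Sum>j\<in>{1..m}. lam j *\<^sub>R gf j x) + (\<Sum>i\<in>?A. c (Inr i) *\<^sub>R gg i x)"
    unfolding K_def lam_def w_def using finA disj
    by (simp add: sum.union_disjoint sum.reindex)
  have s3: "(\<Sum>i\<in>{1..p}. mu i *\<^sub>R gg i x) = (\<Sum>i\<in>?A. c (Inr i) *\<^sub>R gg i x)"
  proof -
    have "(\<Sum>i\<in>{1..p}. mu i *\<^sub>R gg i x) = (\<Sum>i\<in>{1..p}. if i \<in> ?A then c (Inr i) *\<^sub>R gg i x else 0)"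
      unfolding mu_def by (rule sum.cong) auto
    also have "\<dots> = (\<Sum>i\<in>{1..p} \<inter> ?A. c (Inr i) *\<^sub>R gg i x)"
      by (rule sum.inter_restrict[symmetric]) simp
    also have "{1..p} \<inter> ?A = ?A" using Asub by auto
    finally show ?thesis .
  qed
  have lamnz: "\<exists>j\<in>{1..m}. lam j \<noteq> 0"
  proof (rule ccontr)
    assume "\<not> (\<exists>j\<in>{1..m}. lam j \<noteq> 0)"
    hence l0: "\<forall>j\<in>{1..m}. lam j = 0" by blast
    hence sA: "(\<Sum>i\<in>?A. c (Inr i)) = 1" using s1 c(2) by simp
    have vA: "(\<Sum>i\<in>?A. c (Inr i) *\<^sub>R gg i x) = 0" using s2 c(3) l0 by simp
    obtain k where k: "k > 0" "\<forall>s\<in>(\<lambda>i. gg i x \<bullet> z) ` ?A. s \<le> - k"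
      using neg_bound[of "(\<lambda>i. gg i x \<bullet> z) ` ?A"] finA z by auto
    have "0 = (\<Sum>i\<in>?A. c (Inr i) *\<^sub>R gg i x) \<bullet> z" using vA by simp
    also have "\<dots> = (\<Sum>i\<in>?A. c (Inr i) * (gg i x \<bullet> z))" by (simp add: inner_sum_left)
    also have "\<dots> \<le> (\<Sum>i\<in>?A. c (Inr i) * (- k))"
    proof (rule sum_mono)
      fix i assume i: "i \<in> ?A"
      have "0 \<le> c (Inr i)" using c(1) i unfolding K_def by auto
      moreover have "gg i x \<bullet> z \<le> - k" using k(2) i by auto
      ultimately show "c (Inr i) * (gg i x \<bullet> z) \<le> c (Inr i) * (- k)" by (metis mult_left_mono)
    qed
    also have "\<dots> = (\<Sum>i\<in>?A. c (Inr i)) * (- k)" by (rule sum_distrib_right[symmetric])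
    also have "\<dots> = - k" using sA by simp
    finally show False using k(1) by simp
  qed
  have "\<forall>j\<in>{1..m}. lam j \<ge> 0" using c(1) unfolding K_def lam_def by auto
  moreover have "\<forall>i\<in>{1..p}. mu i \<ge> 0" using c(1) unfolding K_def mu_def by auto
  moreover have "(\<Sum>j\<in>{1..m}. lam j *\<^sub>R gf j x) + (\<Sum>i\<in>{1..p}. mu i *\<^sub>R gg i x) = 0"
    using s2 s3 c(3) by simp
  moreover have "\<forall>i\<in>{1..p}. mu i * g i x = 0"
    unfolding mu_def actI_def using P0 by auto
  ultimately show ?thesis unfolding strongly_critical_def using feas lamnz by blast
qed

lemma partIII:
  assumes f_C1: "\<forall>j\<in>{1..m}. (\<forall>y. (f j has_derivative (\<lambda>h. gf j y \<bullet> h)) (at y)) \<and> continuous_on UNIV (gf j)"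
    and g_C1: "\<forall>i\<in>{1..p}. (\<forall>y. (g i has_derivative (\<lambda>h. gg i y \<bullet> h)) (at y)) \<and> continuous_on UNIV (gg i)"
    and sol: "QP_solution m gf p g gg x t d"
    and dnz: "d \<noteq> 0"
  shows "\<exists>\<sigma>b>0. \<forall>\<sigma>\<ge>\<sigma>b. \<forall>j\<in>{1..m}.
           theta (gf j) p g gg \<sigma> x d < 0 \<and>
           (\<exists>\<alpha>b>0. \<forall>\<alpha>\<in>{0<..\<alpha>b}. Psi (f j) p g \<sigma> (x + \<alpha> *\<^sub>R d) < Psi (f j) p g \<sigma> x)"
proof -
  let ?P = "Phi p g x" and ?S = "Phi_star p g gg x d"
  have dd: "d \<bullet> d > 0" using dnz by simp
  have feas: "QP_feasible m gf p g gg x t d" using sol unfolding QP_solution_def by auto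
  have fj: "\<And>j. j \<in> {1..m} \<Longrightarrow> gf j x \<bullet> d \<le> t" using feas unfolding QP_feasible_def by auto
  have gi: "\<And>i. i \<in> {1..p} \<Longrightarrow> g i x + gg i x \<bullet> d \<le> t" using feas unfolding QP_feasible_def by auto
  have tI: "t + (1/2) * (d \<bullet> d) \<le> ?P" by (rule partI[OF sol])
  have ps: "?S \<le> max 0 t - ?P"
  proof (rule Pstar_le)
    fix i assume "i \<in> actI p g x"
    hence "i \<in> {1..p}" unfolding actI_def by auto
    thus "g i x + gg i x \<bullet> d \<le> max 0 t" using gi by force
  qed simp
  define sb where "sb = 2 * \<bar>t\<bar> / (d \<bullet> d) + 1"
  have sbpos: "sb > 0" unfolding sb_def using dd by (simp add: add_nonneg_pos)
  have "\<forall>\<sigma>\<ge>sb. \<forall>j\<in>{1..m}.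
           theta (gf j) p g gg \<sigma> x d < 0 \<and>
           (\<exists>\<alpha>b>0. \<forall>\<alpha>\<in>{0<..\<alpha>b}. Psi (f j) p g \<sigma> (x + \<alpha> *\<^sub>R d) < Psi (f j) p g \<sigma> x)"
  proof (intro allI impI ballI)
    fix \<sigma> j assume sg: "\<sigma> \<ge> sb" and j: "j \<in> {1..m}"
    have spos: "\<sigma> > 0" using sg sbpos by simp
    have th1: "theta (gf j) p g gg \<sigma> x d \<le> t + \<sigma> * (max 0 t - ?P)"
    proof -
      have "\<sigma> * ?S \<le> \<sigma> * (max 0 t - ?P)" using ps spos by (simp add: mult_left_mono)
      thus ?thesis unfolding theta_def using fj[OF j] by simp
    qed
    have thneg: "theta (gf j) p g gg \<sigma> x d < 0"
    proof (cases "t < 0")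
      case True
      have "\<sigma> * (max 0 t - ?P) \<le> 0" using True spos Phi_ge0[of p g x]
        by (simp add: mult_nonneg_nonpos)
      thus ?thesis using th1 True by simp
    next
      case False
      have "\<sigma> * (max 0 t - ?P) \<le> \<sigma> * (- (d \<bullet> d) / 2)"
        using False tI spos by (intro mult_left_mono) auto
      moreover have "\<sigma> * (d \<bullet> d) \<ge> sb * (d \<bullet> d)" using sg dd by (simp add: mult_right_mono)
      moreover have "sb * (d \<bullet> d) = 2 * \<bar>t\<bar> + d \<bullet> d" unfolding sb_def using dd by (simp add: field_simps)
      ultimately show ?thesis using th1 False by (simp add: algebra_simps) (use dd in linarith)
    qed
    define e where "e = - theta (gf j) p g gg \<sigma> x d"
    have epos: "e > 0" using thneg unfolding e_def by simp
    have pos: "\<forall>\<^sub>F a in at_right (0::real). 0 < a" by (simp add: eventually_at_filter)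
    have lt1: "\<forall>\<^sub>F a in at_right (0::real). a < 1"
      by (rule order_tendstoD(2)[OF tendsto_ident_at]) simp
    have ef: "\<forall>\<^sub>F a in at_right 0. f j (x + a *\<^sub>R d) - f j x < a * (gf j x \<bullet> d + e / 4)"
      using f_C1 j epos by (intro ev_quot) auto
    have eg: "\<forall>i\<in>{1..p}. \<forall>\<^sub>F a in at_right 0. g i (x + a *\<^sub>R d) \<le> ?P + a * ?S + a * (e / (4 * \<sigma>))"
    proof
      fix i assume i: "i \<in> {1..p}"
      have der: "(g i has_derivative (\<lambda>h. gg i x \<bullet> h)) (at x)" using g_C1 i by auto
      show "\<forall>\<^sub>F a in at_right 0. g i (x + a *\<^sub>R d) \<le> ?P + a * ?S + a * (e / (4 * \<sigma>))"
      proof (cases "g i x = ?P")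
        case True
        hence "i \<in> actI p g x" using i unfolding actI_def by auto
        hence "g i x + gg i x \<bullet> d \<le> ?P + ?S" by (rule Pstar_ge(2))
        hence gs: "gg i x \<bullet> d \<le> ?S" using True by simp
        have "\<forall>\<^sub>F a in at_right 0. g i (x + a *\<^sub>R d) - g i x < a * (gg i x \<bullet> d + e / (4 * \<sigma>))"
          using der epos spos by (intro ev_quot) auto
        with pos show ?thesis
        proof eventually_elim
          case (elim a)
          have m1: "a * (gg i x \<bullet> d) \<le> a * ?S" using elim gs by (simp add: mult_left_mono)
          have m2: "g i (x + a *\<^sub>R d) - g i x < a * (gg i x \<bullet> d) + a * (e / (4 * \<sigma>))"
            using elim(2) by (simp add: distrib_left)
          show ?case using m1 m2 True by linarith
        qed
      next
        case False
        hence lt: "g i x < ?P" using Phi_ge[OF i, of g x] by simp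
        have "((\<lambda>a. g i (x + a *\<^sub>R d) - (?P + a * ?S + a * (e / (4 * \<sigma>)))) \<longlongrightarrow>
                g i x - (?P + 0 * ?S + 0 * (e / (4 * \<sigma>)))) (at_right 0)"
          by (intro tendsto_intros ev_cont[OF der])
        hence "\<forall>\<^sub>F a in at_right 0. g i (x + a *\<^sub>R d) - (?P + a * ?S + a * (e / (4 * \<sigma>))) < 0"
          by (rule order_tendstoD(2)) (use lt in simp)
        thus ?thesis by eventually_elim simp
      qed
    qed
    have egall: "\<forall>\<^sub>F a in at_right 0. \<forall>i\<in>{1..p}. g i (x + a *\<^sub>R d) \<le> ?P + a * ?S + a * (e / (4 * \<sigma>))"
      by (rule eventually_ball_finite[OF _ eg]) simp
    have "\<forall>\<^sub>F a in at_right 0. Psi (f j) p g \<sigma> (x + a *\<^sub>R d) < Psi (f j) p g \<sigma> x"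
      using pos lt1 ef egall
    proof eventually_elim
      case (elim a)
      have nn: "0 \<le> ?P + a * ?S + a * (e / (4 * \<sigma>))"
      proof -
        have "0 \<le> (1 - a) * ?P" using elim Phi_ge0[of p g x] by simp
        moreover have "0 \<le> a * (?P + ?S)" using elim Pstar_ge(1)[of p g x gg d] by simp
        moreover have "0 \<le> a * (e / (4 * \<sigma>))" using elim epos spos by simp
        ultimately show ?thesis by (simp add: algebra_simps)
      qed
      have Pb: "Phi p g (x + a *\<^sub>R d) \<le> ?P + a * ?S + a * (e / (4 * \<sigma>))"
        by (rule Phi_le[OF nn]) (use elim in auto)
      have "\<sigma> * Phi p g (x + a *\<^sub>R d) \<le> \<sigma> * (?P + a * ?S + a * (e / (4 * \<sigma>)))"
        using Pb spos by (simp add: mult_left_mono)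
      also have "\<dots> = \<sigma> * ?P + a * (\<sigma> * ?S) + a * e / 4" using spos by (simp add: field_simps)
      finally have h: "\<sigma> * Phi p g (x + a *\<^sub>R d) \<le> \<sigma> * ?P + a * (\<sigma> * ?S) + a * e / 4" .
      have th: "gf j x \<bullet> d + \<sigma> * ?S = - e" unfolding e_def theta_def by simp
      have ae: "0 < a * e" using elim epos by simp
      have th2: "a * (gf j x \<bullet> d) + a * (\<sigma> * ?S) = - (a * e)"
        using arg_cong[OF th, of "\<lambda>u. a * u"] by (simp add: distrib_left)
      have f2: "f j (x + a *\<^sub>R d) < f j x + a * (gf j x \<bullet> d) + a * e / 4"
        using elim(3) by (simp add: distrib_left)
      show ?case using h f2 th2 ae unfolding Psi_def by linarith
    qed
    then obtain b where b: "b > 0" "\<forall>y>0. y < b \<longrightarrow> Psi (f j) p g \<sigma> (x + y *\<^sub>R d) < Psi (f j) p g \<sigma> x"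
      unfolding eventually_at_right_field by auto
    have "\<forall>\<alpha>\<in>{0<..b/2}. Psi (f j) p g \<sigma> (x + \<alpha> *\<^sub>R d) < Psi (f j) p g \<sigma> x"
      using b by auto
    moreover have "b / 2 > 0" using b by simp
    ultimately show "theta (gf j) p g gg \<sigma> x d < 0 \<and>
           (\<exists>\<alpha>b>0. \<forall>\<alpha>\<in>{0<..\<alpha>b}. Psi (f j) p g \<sigma> (x + \<alpha> *\<^sub>R d) < Psi (f j) p g \<sigma> x)"
      using thneg by blast
  qed
  thus ?thesis using sbpos by blast
qed

theorem mainTheorem2:
  fixes m p :: nat
    and f g :: "nat \<Rightarrow> real^'n \<Rightarrow> real"
    and gf gg :: "nat \<Rightarrow> real^'n \<Rightarrow> real^'n"
    and x d :: "real^'n" and t :: real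
  assumes m_pos: "m \<ge> 1"
    and f_C1: "\<forall>j\<in>{1..m}. (\<forall>y. (f j has_derivative (\<lambda>h. gf j y \<bullet> h)) (at y)) \<and> continuous_on UNIV (gf j)"
    and g_C1: "\<forall>i\<in>{1..p}. (\<forall>y. (g i has_derivative (\<lambda>h. gg i y \<bullet> h)) (at y)) \<and> continuous_on UNIV (gg i)"
    and sol: "QP_solution m gf p g gg x t d"
  shows "t \<le> Phi p g x - (1/2) * (d \<bullet> d)
    \<and> (d = 0 \<and> MFCQ p g gg x \<longrightarrow> strongly_critical m gf p g gg x)
    \<and> (d \<noteq> 0 \<longrightarrow> (\<exists>\<sigma>b>0. \<forall>\<sigma>\<ge>\<sigma>b. \<forall>j\<in>{1..m}.
           theta (gf j) p g gg \<sigma> x d < 0 \<and>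
           (\<exists>\<alpha>b>0. \<forall>\<alpha>\<in>{0<..\<alpha>b}. Psi (f j) p g \<sigma> (x + \<alpha> *\<^sub>R d) < Psi (f j) p g \<sigma> x)))"
proof -
  have I: "t \<le> Phi p g x - (1/2) * (d \<bullet> d)" using partI[OF sol] by simp
  have II: "d = 0 \<and> MFCQ p g gg x \<longrightarrow> strongly_critical m gf p g gg x"
    using partII[OF m_pos, of gf p g gg x t] sol by blast
  have III: "d \<noteq> 0 \<longrightarrow> (\<exists>\<sigma>b>0. \<forall>\<sigma>\<ge>\<sigma>b. \<forall>j\<in>{1..m}.
           theta (gf j) p g gg \<sigma> x d < 0 \<and>
           (\<exists>\<alpha>b>0. \<forall>\<alpha>\<in>{0<..\<alpha>b}. Psi (f j) p g \<sigma> (x + \<alpha> *\<^sub>R d) < Psi (f j) p g \<sigma> x))"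
    using partIII[OF f_C1 g_C1 sol] by blast
  show ?thesis using I II III by blast
qed

end
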